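(* The matrix $$U_5=\tfrac12 S_0\otimes\left(I_2\otimes I_2+\sigma_1\otimes\sigma_1+\sigma_2\otimes\sigma_2+\sigma_3\otimes\sigma_3\right)+S_3\otimes I_2\otimes\sigma_1$$ on $\mathbb{C}^2\otimes\mathbb{C}^2\otimes\mathbb{C}^2$ is unitary and $\mathrm{sr}(U_5)=5$.
   Context: $S_0=\begin{bmatrix}1&0\\0&0\end{bmatrix}$, $S_1=\begin{bmatrix}0&1\\0&0\end{bmatrix}$, $S_2=\begin{bmatrix}0&0\\1&0\end{bmatrix}$, $S_3=\begin{bmatrix}0&0\\0&1\end{bmatrix}$. $I_2$ is the $2\times2$ identity and $\sigma_1=\begin{bmatrix}0&1\\1&0\end{bmatrix}$, $\sigma_2=\begin{bmatrix}0&-i\\i&0\end{bmatrix}$, $\sigma_3=\begin{bmatrix}1&0\\0&-1\end{bmatrix}$ are the Pauli matrices. For a matrix $U$ on $\mathbb{C}^2\otimes\mathbb{C}^2\otimes\mathbb{C}^2$ (systems $A,B,C$), its Schmidt rank $\mathrm{sr}(U)$ is the least integer $r$ such that $U=\sum_{j=1}^r A_j\otimes B_j\otimes C_j$ with $A_j,B_j,C_j$ complex $2\times 2$ matrices (i.e. the tensor rank of $U$). *)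

theory Defs
  imports "HOL-Analysis.Analysis"
begin

type_synonym cmat2 = "complex ^ 2 ^ 2"
type_synonym cmat8 = "complex ^ (2 \<times> 2 \<times> 2) ^ (2 \<times> 2 \<times> 2)"

definition mat2 :: "complex \<Rightarrow> complex \<Rightarrow> complex \<Rightarrow> complex \<Rightarrow> cmat2" where
  "mat2 a b c d = (\<chi> i j. if i = 0 then (if j = 0 then a else b) else (if j = 0 then c else d))"

definition S0 :: cmat2 where "S0 = mat2 1 0 0 0"
definition S1 :: cmat2 where "S1 = mat2 0 1 0 0"
definition S2 :: cmat2 where "S2 = mat2 0 0 1 0"
definition S3 :: cmat2 where "S3 = mat2 0 0 0 1"
definition I2 :: cmat2 where "I2 = mat2 1 0 0 1"
definition sigma1 :: cmat2 where "sigma1 = mat2 0 1 1 0"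
definition sigma2 :: cmat2 where "sigma2 = mat2 0 (- \<i>) \<i> 0"
definition sigma3 :: cmat2 where "sigma3 = mat2 1 0 0 (-1)"

definition kron3 :: "cmat2 \<Rightarrow> cmat2 \<Rightarrow> cmat2 \<Rightarrow> cmat8" where
  "kron3 A B C = (\<chi> i j. A $ fst i $ fst j * B $ fst (snd i) $ fst (snd j)
                            * C $ snd (snd i) $ snd (snd j))"

definition cadj :: "complex ^ 'n ^ 'n \<Rightarrow> complex ^ 'n ^ 'n" where
  "cadj U = (\<chi> i j. cnj (U $ j $ i))"

definition unitary :: "complex ^ 'n ^ 'n \<Rightarrow> bool" where
  "unitary U \<longleftrightarrow> cadj U ** U = mat 1 \<and> U ** cadj U = mat 1"

text \<open>Schmidt rank = tensor rank over 2x2x2 complex matrices.\<close>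
definition sr :: "cmat8 \<Rightarrow> nat" where
  "sr U = (LEAST r. \<exists>A B C :: nat \<Rightarrow> cmat2. U = (\<Sum>j<r. kron3 (A j) (B j) (C j)))"

definition U5 :: cmat8 where
  "U5 = (1/2) *\<^sub>R kron3 S0 I2 I2 + (1/2) *\<^sub>R kron3 S0 sigma1 sigma1
      + (1/2) *\<^sub>R kron3 S0 sigma2 sigma2 + (1/2) *\<^sub>R kron3 S0 sigma3 sigma3
      + kron3 S3 I2 sigma1"

end

theory Submission imports Defs begin

lemma two_cases: "(x::2) = 0 \<or> x = 1"
  using exhaust_2[of x] by auto

lemma UNIV2: "(UNIV :: 2 set) = {0,1}" using two_cases by auto

definition pi8 :: "2 \<times> 2 \<times> 2 \<Rightarrow> 2 \<times> 2 \<times> 2" where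
  "pi8 x = (if fst x = 0 then (0, snd (snd x), fst (snd x)) else (1, fst (snd x), snd (snd x) + 1))"

lemma mat2_nth: "mat2 a b c d $ i $ j = (if i = 0 then (if j = 0 then a else b) else (if j = 0 then c else d))"
  by (simp add: mat2_def)

lemma swap_entry:
  "(1/2) * (I2$b$d * I2$c$e) + (1/2) * (sigma1$b$d * sigma1$c$e) + (1/2) * (sigma2$b$d * sigma2$c$e)
   + (1/2) * (sigma3$b$d * sigma3$c$e) = (if d = c \<and> e = b then 1 else 0)"
  using two_cases[of b] two_cases[of c] two_cases[of d] two_cases[of e]
  by (elim disjE) (simp_all add: I2_def sigma1_def sigma2_def sigma3_def mat2_nth)

lemma U5_entry0: "U5 $ (i,b,c) $ (k,d,e) = S0$i$k * ((1/2) * (I2$b$d * I2$c$e) + (1/2) * (sigma1$b$d * sigma1$c$e) + (1/2) * (sigma2$b$d * sigma2$c$e)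
   + (1/2) * (sigma3$b$d * sigma3$c$e)) + S3$i$k * (I2$b$d * sigma1$c$e)"
  unfolding U5_def by (simp only: vector_add_component vector_scaleR_component) (simp add: kron3_def scaleR_conv_of_real algebra_simps)

lemma U5_entry: "U5 $ x $ y = (if y = pi8 x then 1 else 0)"
proof -
  obtain i b c where x: "x = (i,b,c)" by (cases x) auto
  obtain k d e where y: "y = (k,d,e)" by (cases y) auto
  have s3: "I2$b$d * sigma1$c$e = (if d = b \<and> e = c + 1 then 1 else 0)"
    using two_cases[of b] two_cases[of c] two_cases[of d] two_cases[of e]
    by (elim disjE) (simp_all add: I2_def sigma1_def mat2_nth)
  show ?thesis unfolding x y U5_entry0 swap_entry s3
    using two_cases[of i] two_cases[of k]
    by (elim disjE) (auto simp add: pi8_def S0_def S3_def mat2_nth)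
qed

lemma two_ne: "(x::2) + 1 \<noteq> x"
  using two_cases[of x] by auto

lemma pi8_inv: "pi8 (pi8 x) = x"
proof -
  obtain i b c where x: "x = (i,b,c)" by (cases x) auto
  show ?thesis unfolding x using two_cases[of i] two_cases[of c]
    by (elim disjE) (auto simp: pi8_def)
qed

lemma pi8_eq: "(y = pi8 x) = (x = pi8 y)"
  using pi8_inv by metis

lemma unitary_U5: "unitary U5"
proof -
  have c: "cadj U5 = U5"
    by (simp add: vec_eq_iff cadj_def U5_entry pi8_eq)
  have m: "U5 ** U5 = mat 1"
  proof -
    have "(U5 ** U5) $ x $ z = mat 1 $ x $ z" for x z
    proof -
      have "(U5 ** U5) $ x $ z = (\<Sum>y\<in>UNIV. if y = pi8 x then (if z = pi8 y then 1 else 0) else 0)"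
        unfolding matrix_matrix_mult_def U5_entry vec_lambda_beta by (intro sum.cong) auto
      also have "\<dots> = (if z = x then 1 else 0)" by (simp add: sum.delta' pi8_inv)
      finally show ?thesis by (simp add: mat_def eq_commute)
    qed
    then show ?thesis by (simp add: vec_eq_iff)
  qed
  show ?thesis unfolding unitary_def c m by simp
qed

type_synonym idx = "2 \<times> 2"

definition h :: "idx \<Rightarrow> nat" where
  "h k = (if fst k = 0 then 0 else 2) + (if snd k = 0 then 0 else 1)"

lemma UNIVidx: "(UNIV :: idx set) = {(0,0),(0,1),(1,0),(1,1)}"
  using two_cases by auto

lemma sum4: "(\<Sum>j<4. f j) = (\<Sum>k\<in>(UNIV::idx set). f (h k))"
  by (simp add: UNIVidx h_def eval_nat_numeral lessThan_Suc add.commute add.left_commute)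

lemma diag_left: "((\<chi> k l. if k = l then d k else 0) ** (X::'a::comm_ring_1^'n^'n)) $ p $ q = d p * X$p$q"
proof -
  have "((\<chi> k l. if k = l then d k else 0) ** X) $ p $ q = (\<Sum>k\<in>UNIV. if k = p then d p * X$k$q else 0)"
    unfolding matrix_matrix_mult_def vec_lambda_beta by (intro sum.cong) auto
  then show ?thesis by (simp add: sum.delta')
qed

lemma diag_right: "((X::'a::comm_ring_1^'n^'n) ** (\<chi> k l. if k = l then d k else 0)) $ p $ q = X$p$q * d q"
proof -
  have "(X ** (\<chi> k l. if k = l then d k else 0)) $ p $ q = (\<Sum>k\<in>UNIV. if k = q then X$p$k * d q else 0)"
    unfolding matrix_matrix_mult_def vec_lambda_beta by (intro sum.cong) auto
  then show ?thesis by (simp add: sum.delta')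
qed

lemma no4:
  fixes A B C :: "nat \<Rightarrow> cmat2"
  assumes eq: "U5 = (\<Sum>j<4. kron3 (A j) (B j) (C j))"
  shows False
proof -
  define a where "a k = A (h k) $ 0 $ 0" for k
  define b where "b k = A (h k) $ 1 $ 1" for k
  define Um :: "complex^idx^idx" where "Um = (\<chi> p k. B (h k) $ fst p $ snd p)"
  define Vt :: "complex^idx^idx" where "Vt = (\<chi> k q. C (h k) $ fst q $ snd q)"
  define Da :: "complex^idx^idx" where "Da = (\<chi> k l. if k = l then a k else 0)"
  define Db :: "complex^idx^idx" where "Db = (\<chi> k l. if k = l then b k else 0)"
  define Pm :: "complex^idx^idx" where "Pm = (\<chi> p q. if q = prod.swap p then 1 else 0)"
  define Nm :: "complex^idx^idx" where "Nm = (\<chi> p q. if fst p = snd p \<and> snd q = fst q + 1 then 1 else 0)"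
  have ent: "U5 $ x $ y = (\<Sum>k\<in>UNIV. A (h k) $ fst x $ fst y * B (h k) $ fst (snd x) $ fst (snd y)
      * C (h k) $ snd (snd x) $ snd (snd y))" for x y
    unfolding eq sum_component sum4 by (simp add: kron3_def)
  have UDV: "(Um ** (\<chi> k l. if k = l then d k else 0) ** Vt) $ p $ q = (\<Sum>k\<in>UNIV. Um$p$k * d k * Vt$k$q)" for d p q
    by (simp add: matrix_matrix_mult_def diag_right[unfolded matrix_matrix_mult_def vec_lambda_beta])
  have PUV: "Pm = Um ** Da ** Vt"
  proof -
    have "Pm $ p $ q = (Um ** Da ** Vt) $ p $ q" for p q
    proof -
      have "Pm $ p $ q = U5 $ (0, fst p, fst q) $ (0, snd p, snd q)"
        by (cases p; cases q) (auto simp: Pm_def U5_entry pi8_def)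
      also have "\<dots> = (Um ** Da ** Vt) $ p $ q"
        unfolding ent Da_def UDV by (simp add: Um_def Vt_def a_def mult.commute mult.left_commute)
      finally show ?thesis .
    qed
    then show ?thesis by (simp add: vec_eq_iff)
  qed
  have NUV: "Nm = Um ** Db ** Vt"
  proof -
    have "Nm $ p $ q = (Um ** Db ** Vt) $ p $ q" for p q
    proof -
      have "Nm $ p $ q = U5 $ (1, fst p, fst q) $ (1, snd p, snd q)"
        by (cases p; cases q) (auto simp: Nm_def U5_entry pi8_def)
      also have "\<dots> = (Um ** Db ** Vt) $ p $ q"
        unfolding ent Db_def UDV by (simp add: Um_def Vt_def b_def mult.commute mult.left_commute)
      finally show ?thesis .
    qed
    then show ?thesis by (simp add: vec_eq_iff)
  qed
  have PP: "Pm ** Pm = mat 1"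
  proof -
    have "(Pm ** Pm) $ p $ q = mat 1 $ p $ q" for p q
    proof -
      have "(Pm ** Pm) $ p $ q = (\<Sum>r\<in>UNIV. if r = prod.swap p then (if q = prod.swap r then 1 else 0) else 0)"
        unfolding matrix_matrix_mult_def Pm_def vec_lambda_beta by (intro sum.cong) auto
      also have "\<dots> = (if q = p then 1 else 0)" by (simp add: sum.delta')
      finally show ?thesis by (simp add: mat_def eq_commute)
    qed
    then show ?thesis by (simp add: vec_eq_iff)
  qed
  have NP: "(Nm ** Pm) $ p $ q = (if fst p = snd p \<and> fst q = snd q + 1 then 1 else 0)" for p q
  proof -
    have "(Nm ** Pm) $ p $ q = (\<Sum>r\<in>UNIV. if r = prod.swap q then Nm $ p $ r else 0)"
      unfolding matrix_matrix_mult_def Pm_def vec_lambda_beta by (intro sum.cong) auto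
    also have "\<dots> = Nm $ p $ prod.swap q" by (simp add: sum.delta')
    finally show ?thesis by (cases q) (simp add: Nm_def)
  qed
  have NPN: "Nm ** Pm ** Nm = 0"
  proof -
    have "(Nm ** Pm ** Nm) $ p $ q = 0" for p q
    proof -
      have "(Nm ** Pm) $ p $ r * Nm $ r $ q = 0" for r
        unfolding NP using two_ne[of "snd r"] by (auto simp: Nm_def)
      then have "(\<Sum>r\<in>UNIV. (Nm ** Pm) $ p $ r * Nm $ r $ q) = 0" by (intro sum.neutral) blast
      then show ?thesis by (simp only: matrix_matrix_mult_def vec_lambda_beta)
    qed
    then show ?thesis by (simp add: vec_eq_iff)
  qed
  define Ui where "Ui = Da ** Vt ** Pm"
  define Vi where "Vi = Pm ** Um ** Da"
  have "Um ** Ui = mat 1" using PP unfolding Ui_def PUV by (simp add: matrix_mul_assoc)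
  then have UiU: "Ui ** Um = mat 1" using matrix_left_right_inverse by blast
  have "Vi ** Vt = mat 1" using PP unfolding Vi_def PUV by (simp add: matrix_mul_assoc)
  then have VVi: "Vt ** Vi = mat 1" using matrix_left_right_inverse by blast
  define W where "W = Vt ** Pm ** Um"
  have WD: "W ** Da = mat 1" using VVi unfolding W_def Vi_def by (simp add: matrix_mul_assoc)
  have "Um ** (Db ** W ** Db) ** Vt = 0" using NPN unfolding NUV W_def by (simp add: matrix_mul_assoc)
  then have "Ui ** (Um ** (Db ** W ** Db) ** Vt) ** Vi = 0" by simp
  then have DWD: "Db ** W ** Db = 0"
    by (simp add: matrix_mul_assoc UiU) (metis VVi matrix_mul_assoc matrix_mul_rid)
  have b0: "b k = 0" for k
  proof -
    have "(W ** Da) $ k $ k = 1" using WD by (simp add: mat_def)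
    then have "W $ k $ k * a k = 1" unfolding Da_def diag_right .
    then have w: "W $ k $ k \<noteq> 0" by auto
    have "(Db ** W ** Db) $ k $ k = 0" using DWD by simp
    then have "b k * W $ k $ k * b k = 0" unfolding Db_def diag_right diag_left .
    then show ?thesis using w by simp
  qed
  have "Db = 0" by (simp add: Db_def b0 vec_eq_iff)
  then have "Nm = 0" using NUV by simp
  moreover have "Nm $ (0,0) $ (0,1) = 1" by (simp add: Nm_def)
  ultimately show False by simp
qed

lemma kron3_scale: "kron3 (c *\<^sub>R X) Y Z = c *\<^sub>R kron3 X Y Z"
  unfolding kron3_def by (simp add: vec_eq_iff vector_scaleR_component mult_scaleR_left)

lemma kron3_zero: "kron3 0 Y Z = 0"
  by (simp add: kron3_def vec_eq_iff)

lemma decomp5: "\<exists>A B C :: nat \<Rightarrow> cmat2. U5 = (\<Sum>j<5. kron3 (A j) (B j) (C j))"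
proof -
  define A where "A j = (if j < 4 then (1/2) *\<^sub>R S0 else S3)" for j :: nat
  define B where "B j = [I2, sigma1, sigma2, sigma3, I2] ! j" for j
  define C where "C j = [I2, sigma1, sigma2, sigma3, sigma1] ! j" for j
  have s5: "(\<Sum>j<5. f j) = f 0 + f 1 + f 2 + f 3 + f 4" for f :: "nat \<Rightarrow> cmat8"
    by (simp add: eval_nat_numeral)
  have e0: "kron3 (A 0) (B 0) (C 0) = (1/2) *\<^sub>R kron3 S0 I2 I2"
    unfolding A_def B_def C_def kron3_scale[symmetric] by simp
  have e1: "kron3 (A 1) (B 1) (C 1) = (1/2) *\<^sub>R kron3 S0 sigma1 sigma1"
    unfolding A_def B_def C_def kron3_scale[symmetric] by simp
  have e2: "kron3 (A 2) (B 2) (C 2) = (1/2) *\<^sub>R kron3 S0 sigma2 sigma2"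
    unfolding A_def B_def C_def kron3_scale[symmetric] by simp
  have e3: "kron3 (A 3) (B 3) (C 3) = (1/2) *\<^sub>R kron3 S0 sigma3 sigma3"
    unfolding A_def B_def C_def kron3_scale[symmetric] by (simp add: eval_nat_numeral)
  have e4: "kron3 (A 4) (B 4) (C 4) = kron3 S3 I2 sigma1"
    unfolding A_def B_def C_def by (simp add: eval_nat_numeral)
  have "(\<Sum>j<5. kron3 (A j) (B j) (C j)) = U5"
    unfolding s5 U5_def e0 e1 e2 e3 e4 ..
  then show ?thesis by metis
qed

lemma le4:
  fixes A B C :: "nat \<Rightarrow> cmat2"
  assumes eq: "U5 = (\<Sum>j<r. kron3 (A j) (B j) (C j))" and r: "r \<le> 4"
  shows False
proof -
  define A' where "A' j = (if j < r then A j else 0)" for j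
  have "(\<Sum>j<4. kron3 (A' j) (B j) (C j)) = (\<Sum>j<r. kron3 (A' j) (B j) (C j))"
    by (rule sum.mono_neutral_right) (use r in \<open>auto simp: A'_def kron3_zero\<close>)
  also have "\<dots> = (\<Sum>j<r. kron3 (A j) (B j) (C j))" by (simp add: A'_def)
  finally show False using no4[of A' B C] eq by simp
qed

theorem mainTheorem4:
  shows "unitary U5 \<and> sr U5 = 5"
proof
  show "unitary U5" by (rule unitary_U5)
  show "sr U5 = 5"
    unfolding sr_def
  proof (rule Least_equality)
    show "\<exists>A B C :: nat \<Rightarrow> cmat2. U5 = (\<Sum>j<5. kron3 (A j) (B j) (C j))" by (rule decomp5)
    fix y assume "\<exists>A B C :: nat \<Rightarrow> cmat2. U5 = (\<Sum>j<y. kron3 (A j) (B j) (C j))"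
    then obtain A B C :: "nat \<Rightarrow> cmat2" where "U5 = (\<Sum>j<y. kron3 (A j) (B j) (C j))" by blast
    then show "5 \<le> y" using le4[of A B C y] by (cases "y \<le> 4") auto
  qed
qed

end
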